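(* Let $a,b\in\mathbb{R}\setminus\{0\}$. The assignment $k\mapsto aK+bL$, $k^{-1}\mapsto a^{-1}\overline{K}+b^{-1}\overline{L}$ extends to a unital algebra homomorphism $\Phi^{(a,b)}_{\mathcal{H}}:\mathcal{H}_0\to\mathcal{H}$, and this homomorphism is injective.
   Context: $\mathcal{H}_0=\mathcal{H}_0(\mathbf{1},k,k^{-1})$ is the unital $\mathbb{C}$-algebra generated by $k,k^{-1}$ with relations $kk^{-1}=k^{-1}k=\mathbf{1}$ (the Laurent polynomial algebra in $k$). $\mathcal{H}=\mathcal{H}(\mathbf{1},K,\overline{K},L,\overline{L})$ denotes the unital associative $\mathbb{C}$-algebra generated by $K,\overline{K},L,\overline{L}$ subject to the relations $K\overline{K}K=K$, $\overline{K}K\overline{K}=\overline{K}$, $K\overline{K}=\overline{K}K$, $L\overline{L}L=L$, $\overline{L}L\overline{L}=\overline{L}$, $L\overline{L}=\overline{L}L$, and $P+Q=\mathbf{1}$, where $P:=K\overline{K}$ and $Q:=L\overline{L}$. *)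

theory Defs
  imports Complex_Main
begin

text \<open>Free unital associative complex algebra on generators of type 'g:
  noncommutative polynomials = finitely supported functions on words.\<close>

type_synonym 'g fa = "'g list \<Rightarrow> complex"

definition FA :: "'g fa set" where
  "FA = {f. finite {w. f w \<noteq> 0}}"

definition fa_zero :: "'g fa" where "fa_zero = (\<lambda>w. 0)"
definition fa_one :: "'g fa" where "fa_one = (\<lambda>w. if w = [] then 1 else 0)"
definition fa_gen :: "'g \<Rightarrow> 'g fa" where "fa_gen x = (\<lambda>w. if w = [x] then 1 else 0)"
definition fa_add :: "'g fa \<Rightarrow> 'g fa \<Rightarrow> 'g fa" where "fa_add f g = (\<lambda>w. f w + g w)"
definition fa_diff :: "'g fa \<Rightarrow> 'g fa \<Rightarrow> 'g fa" where "fa_diff f g = (\<lambda>w. f w - g w)"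
definition fa_smult :: "complex \<Rightarrow> 'g fa \<Rightarrow> 'g fa" where "fa_smult c f = (\<lambda>w. c * f w)"
definition fa_mult :: "'g fa \<Rightarrow> 'g fa \<Rightarrow> 'g fa" where
  "fa_mult f g = (\<lambda>w. \<Sum>i\<le>length w. f (take i w) * g (drop i w))"

inductive_set fa_ideal :: "'g fa set \<Rightarrow> 'g fa set" for R where
  gen: "r \<in> R \<Longrightarrow> r \<in> fa_ideal R"
| zero: "fa_zero \<in> fa_ideal R"
| add: "x \<in> fa_ideal R \<Longrightarrow> y \<in> fa_ideal R \<Longrightarrow> fa_add x y \<in> fa_ideal R"
| smult: "x \<in> fa_ideal R \<Longrightarrow> fa_smult c x \<in> fa_ideal R"
| mult: "x \<in> fa_ideal R \<Longrightarrow> u \<in> FA \<Longrightarrow> v \<in> FA \<Longrightarrow> fa_mult (fa_mult u x) v \<in> fa_ideal R"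

datatype gen0 = Gk | Gkinv

definition H0_rels :: "gen0 fa set" where
  "H0_rels = { fa_diff (fa_mult (fa_gen Gk) (fa_gen Gkinv)) fa_one,
               fa_diff (fa_mult (fa_gen Gkinv) (fa_gen Gk)) fa_one }"

definition H0_ideal :: "gen0 fa set" where "H0_ideal = fa_ideal H0_rels"

datatype gen = GK | GKb | GL | GLb

definition H_rels :: "gen fa set" where
  "H_rels = (let K = fa_gen GK; Kb = fa_gen GKb; L = fa_gen GL; Lb = fa_gen GLb;
                 P = fa_mult K Kb; Q = fa_mult L Lb in
     { fa_diff (fa_mult (fa_mult K Kb) K) K,
       fa_diff (fa_mult (fa_mult Kb K) Kb) Kb,
       fa_diff (fa_mult K Kb) (fa_mult Kb K),
       fa_diff (fa_mult (fa_mult L Lb) L) L,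
       fa_diff (fa_mult (fa_mult Lb L) Lb) Lb,
       fa_diff (fa_mult L Lb) (fa_mult Lb L),
       fa_diff (fa_add P Q) fa_one })"

definition H_ideal :: "gen fa set" where "H_ideal = fa_ideal H_rels"

text \<open>A map between free algebras inducing a unital algebra homomorphism
  between the quotients FA/I and FA/J (everything required modulo J).\<close>
definition quot_alg_hom :: "'g fa set \<Rightarrow> 'h fa set \<Rightarrow> ('g fa \<Rightarrow> 'h fa) \<Rightarrow> bool" where
  "quot_alg_hom I J \<Phi> \<longleftrightarrow>
     (\<forall>x\<in>FA. \<Phi> x \<in> FA) \<and>
     (\<forall>x\<in>FA. \<forall>y\<in>FA. fa_diff x y \<in> I \<longrightarrow> fa_diff (\<Phi> x) (\<Phi> y) \<in> J) \<and>
     (\<forall>x\<in>FA. \<forall>y\<in>FA. fa_diff (\<Phi> (fa_add x y)) (fa_add (\<Phi> x) (\<Phi> y)) \<in> J) \<and>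
     (\<forall>c. \<forall>x\<in>FA. fa_diff (\<Phi> (fa_smult c x)) (fa_smult c (\<Phi> x)) \<in> J) \<and>
     (\<forall>x\<in>FA. \<forall>y\<in>FA. fa_diff (\<Phi> (fa_mult x y)) (fa_mult (\<Phi> x) (\<Phi> y)) \<in> J) \<and>
     fa_diff (\<Phi> fa_one) fa_one \<in> J"

definition quot_inj :: "'g fa set \<Rightarrow> 'h fa set \<Rightarrow> ('g fa \<Rightarrow> 'h fa) \<Rightarrow> bool" where
  "quot_inj I J \<Phi> \<longleftrightarrow>
     (\<forall>x\<in>FA. \<forall>y\<in>FA. fa_diff (\<Phi> x) (\<Phi> y) \<in> J \<longrightarrow> fa_diff x y \<in> I)"

end

theory Submission
  imports Defs "HOL-Library.Poly_Mapping"
begin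


datatype 'g word = Wd (unwd: "'g list")

instantiation word :: (type) monoid_add
begin
definition zero_word_def: "0 = Wd []"
definition plus_word_def: "x + y = Wd (unwd x @ unwd y)"
instance by standard (auto simp: zero_word_def plus_word_def)
end

lemma Wd_plus[simp]: "Wd a + Wd b = Wd (a @ b)" by (simp add: plus_word_def)

definition to_pm :: "'g fa \<Rightarrow> ('g word \<Rightarrow>\<^sub>0 complex)" where
  "to_pm f = Abs_poly_mapping (\<lambda>w. f (unwd w))"
definition of_pm :: "('g word \<Rightarrow>\<^sub>0 complex) \<Rightarrow> 'g fa" where
  "of_pm p = (\<lambda>l. Poly_Mapping.lookup p (Wd l))"

lemma lookup_to_pm: assumes "f \<in> FA" shows "Poly_Mapping.lookup (to_pm f) w = f (unwd w)"
proof -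
  have "{w. f (unwd w) \<noteq> 0} = Wd ` {l. f l \<noteq> 0}"
    apply (auto simp: image_iff) by (metis word.collapse)
  then have "finite {w. f (unwd w) \<noteq> 0}" using assms by (simp add: FA_def)
  then show ?thesis by (simp add: to_pm_def)
qed

lemma of_pm_FA[simp]: "of_pm p \<in> FA"
proof -
  have "{l. Poly_Mapping.lookup p (Wd l) \<noteq> 0} \<subseteq> unwd ` Poly_Mapping.keys p"
    by (auto simp: image_iff) (metis in_keys_iff word.sel)
  then show ?thesis unfolding FA_def of_pm_def by (auto intro: finite_subset)
qed

lemma of_to_pm[simp]: "f \<in> FA \<Longrightarrow> of_pm (to_pm f) = f"
  by (auto simp: of_pm_def lookup_to_pm)

lemma to_of_pm[simp]: "to_pm (of_pm p) = p"
  by (rule poly_mapping_eqI) (simp add: lookup_to_pm[OF of_pm_FA], simp add: of_pm_def)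

lemma of_pm_inj: "of_pm p = of_pm q \<Longrightarrow> p = q"
  by (metis to_of_pm)

lemma fa_add_pm: "fa_add (of_pm p) (of_pm q) = of_pm (p + q)"
  by (auto simp: fa_add_def of_pm_def lookup_add)
lemma fa_diff_pm: "fa_diff (of_pm p) (of_pm q) = of_pm (p - q)"
  by (auto simp: fa_diff_def of_pm_def lookup_minus)
lemma fa_smult_pm: "fa_smult c (of_pm p) = of_pm (Poly_Mapping.single 0 c * p)"
  by (auto simp: fa_smult_def of_pm_def map.rep_eq when_def simp flip: mult_map_scale_conv_mult)
lemma fa_zero_pm: "fa_zero = of_pm 0"
  by (auto simp: fa_zero_def of_pm_def)
lemma fa_one_pm: "fa_one = of_pm 1"
  by (auto simp: fa_one_def of_pm_def lookup_one zero_word_def)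
lemma fa_gen_pm: "fa_gen x = of_pm (Poly_Mapping.single (Wd [x]) 1)"
  by (auto simp: fa_gen_def of_pm_def lookup_single when_def)

lemma fa_mult_pm: "fa_mult (of_pm p) (of_pm q) = of_pm (p * q)"
proof
  fix l :: "'a list"
  have inner: "Sum_any (\<lambda>n. Poly_Mapping.lookup q n when Wd l = m + n) =
     (Poly_Mapping.lookup q (Wd (drop (length (unwd m)) l)) when m \<in> (\<lambda>i. Wd (take i l)) ` {..length l})" for m
  proof (cases "m \<in> (\<lambda>i. Wd (take i l)) ` {..length l}")
    case True
    then obtain i where i: "i \<le> length l" "m = Wd (take i l)" by auto
    have "Wd l = m + n \<longleftrightarrow> n = Wd (drop (length (unwd m)) l)" for n
    proof -
      have "Wd l = m + n \<longleftrightarrow> take i l @ unwd n = l" using i by (cases n) auto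
      also have "\<dots> \<longleftrightarrow> unwd n = drop i l" using i by (simp add: append_eq_conv_conj min_def)
      finally show ?thesis using i by (cases n) auto
    qed
    then show ?thesis using True by (simp add: when_def)
  next
    case False
    have "Wd l \<noteq> m + n" for n
    proof
      assume "Wd l = m + n"
      then have "l = unwd m @ unwd n" by (cases m, cases n) auto
      then have "m = Wd (take (length (unwd m)) l)" "length (unwd m) \<le> length l" by (cases m; simp)+
      then show False using False by auto
    qed
    then show ?thesis using False by (simp add: when_def)
  qed
  have "of_pm (p * q) l = Sum_any (\<lambda>m. Poly_Mapping.lookup p m * (Poly_Mapping.lookup q (Wd (drop (length (unwd m)) l))
        when m \<in> (\<lambda>i. Wd (take i l)) ` {..length l}))"
    by (simp add: of_pm_def lookup_mult inner mult_when)
  also have "\<dots> = (\<Sum>m\<in>(\<lambda>i. Wd (take i l)) ` {..length l}. Poly_Mapping.lookup p m * Poly_Mapping.lookup q (Wd (drop (length (unwd m)) l)))"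
    apply (subst Sum_any.expand_superset[of "(\<lambda>i. Wd (take i l)) ` {..length l}"])
      apply simp
     apply (rule subsetI, rule ccontr, simp add: when_def)
    apply (rule sum.cong; simp)
    done
  also have "\<dots> = (\<Sum>i\<le>length l. Poly_Mapping.lookup p (Wd (take i l)) * Poly_Mapping.lookup q (Wd (drop i l)))"
  proof (subst sum.reindex)
    show "inj_on (\<lambda>i. Wd (take i l)) {..length l}"
      by (rule inj_onI, drule arg_cong[where f="\<lambda>w. length (unwd w)"], simp)
  qed (rule sum.cong, simp_all add: min_def)
  finally show "fa_mult (of_pm p) (of_pm q) l = of_pm (p * q) l"
    by (simp add: fa_mult_def of_pm_def)
qed



type_synonym 'g pm = "'g word \<Rightarrow>\<^sub>0 complex"

definition sc :: "complex \<Rightarrow> 'g pm" where "sc c = Poly_Mapping.single 0 c"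
definition W :: "('g \<Rightarrow> 'h pm) \<Rightarrow> 'g word \<Rightarrow> 'h pm" where "W G w = prod_list (map G (unwd w))"
definition ext :: "('g \<Rightarrow> 'h pm) \<Rightarrow> 'g pm \<Rightarrow> 'h pm" where
  "ext G p = (\<Sum>k\<in>Poly_Mapping.keys p. sc (Poly_Mapping.lookup p k) * W G k)"

lemma sc_0[simp]: "sc 0 = 0" by (simp add: sc_def)
lemma sc_1[simp]: "sc 1 = 1" by (simp add: sc_def)
lemma sc_add: "sc (a + b) = sc a + sc b" by (simp add: sc_def single_add)
lemma sc_mult: "sc a * sc b = sc (a * b)" by (simp add: sc_def mult_single)

lemma pm_expand: "p = (\<Sum>k\<in>Poly_Mapping.keys p. Poly_Mapping.single k (Poly_Mapping.lookup p k))"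
  by (rule poly_mapping_eqI) (simp add: lookup_sum lookup_single when_def sum.delta in_keys_iff)

lemma single_sc_comm: "Poly_Mapping.single k a * sc c = sc c * Poly_Mapping.single k a"
  by (simp add: sc_def mult_single mult.commute)

lemma sc_comm: "p * sc c = sc c * p"
proof -
  have "p * sc c = (\<Sum>k\<in>Poly_Mapping.keys p. Poly_Mapping.single k (Poly_Mapping.lookup p k) * sc c)"
    by (rule trans[OF arg_cong[where f="\<lambda>x. x * sc c", OF pm_expand[of p]]]) (simp add: sum_distrib_right)
  also have "\<dots> = (\<Sum>k\<in>Poly_Mapping.keys p. sc c * Poly_Mapping.single k (Poly_Mapping.lookup p k))"
    by (simp add: single_sc_comm)
  also have "\<dots> = sc c * p"
    by (rule trans[OF _ arg_cong[where f="\<lambda>x. sc c * x", OF pm_expand[of p, symmetric]]]) (simp add: sum_distrib_left)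
  finally show ?thesis .
qed

lemma mult_sc_left: "x * (sc c * y) = sc c * (x * y)"
proof -
  have "x * (sc c * y) = (x * sc c) * y" by (simp only: mult.assoc)
  also have "\<dots> = (sc c * x) * y" by (subst sc_comm) (rule refl)
  finally show ?thesis by (simp only: mult.assoc)
qed
lemma sc_sc: "sc c * (sc d * y) = sc (c * d) * y"
  by (simp add: sc_mult flip: mult.assoc)

lemma sc_sc2: "sc a * x * (sc b * y) = sc (a * b) * (x * y)"
proof -
  have "sc a * x * (sc b * y) = sc a * (x * (sc b * y))" by (simp only: mult.assoc)
  also have "\<dots> = sc a * (sc b * (x * y))" by (simp only: mult_sc_left[of x b y])
  also have "\<dots> = sc (a * b) * (x * y)" by (simp only: sc_sc)
  finally show ?thesis .
qed

lemma W_zero[simp]: "W G 0 = 1" by (simp add: W_def zero_word_def)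
lemma W_plus: "W G (k + l) = W G k * W G l" by (simp add: W_def plus_word_def)
lemma W_gen[simp]: "W G (Wd [x]) = G x" by (simp add: W_def)

lemma ext_0[simp]: "ext G 0 = 0" by (simp add: ext_def)
lemma ext_single[simp]: "ext G (Poly_Mapping.single k c) = sc c * W G k"
  by (simp add: ext_def)
lemma ext_add: "ext G (p + q) = ext G p + ext G q"
  unfolding ext_def by (rule setsum_keys_plus_distrib) (simp_all add: sc_add distrib_right)
lemma ext_sum: "ext G (\<Sum>i\<in>S. f i) = (\<Sum>i\<in>S. ext G (f i))"
  by (induction S rule: infinite_finite_induct) (simp_all add: ext_add)
lemma ext_minus: "ext G (p - q) = ext G p - ext G q"
proof -
  have "ext G (p - q) + ext G q = ext G p" by (simp only: ext_add[symmetric] diff_add_cancel)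
  then show ?thesis by (simp only: eq_diff_eq)
qed
lemma ext_one[simp]: "ext G 1 = 1"
proof -
  have "ext G (Poly_Mapping.single 0 1) = 1" by (simp only: ext_single sc_1 W_zero mult_1_left)
  then show ?thesis by (simp only: single_one)
qed

lemma ext_mult: "ext G (p * q) = ext G p * ext G q"
proof -
  let ?sp = "\<lambda>k. Poly_Mapping.single k (Poly_Mapping.lookup p k)"
  let ?sq = "\<lambda>l. Poly_Mapping.single l (Poly_Mapping.lookup q l)"
  have "p * q = (\<Sum>k\<in>Poly_Mapping.keys p. \<Sum>l\<in>Poly_Mapping.keys q. ?sp k * ?sq l)"
    by (rule trans[OF arg_cong2[where f="(*)", OF pm_expand[of p] pm_expand[of q]]]) (simp only: sum_product)
  then have "ext G (p * q) = (\<Sum>k\<in>Poly_Mapping.keys p. \<Sum>l\<in>Poly_Mapping.keys q. ext G (?sp k * ?sq l))"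
    by (simp only: ext_sum)
  also have "\<dots> = (\<Sum>k\<in>Poly_Mapping.keys p. \<Sum>l\<in>Poly_Mapping.keys q. ext G (?sp k) * ext G (?sq l))"
    by (simp only: mult_single ext_single W_plus sc_sc2)
  also have "\<dots> = ext G p * ext G q"
    by (rule trans[OF _ arg_cong2[where f="\<lambda>x y. ext G x * ext G y", OF pm_expand[of p, symmetric] pm_expand[of q, symmetric]]])
      (simp only: ext_sum sum_product)
  finally show ?thesis .
qed

lemma ext_sc: "ext G (sc c * p) = sc c * ext G p"
  by (simp add: ext_mult sc_def)

lemma ext_prod_list: "ext G (prod_list xs) = prod_list (map (ext G) xs)"
  by (induction xs) (simp_all add: ext_mult)

lemma ext_comp: "ext G2 (ext G1 p) = ext (\<lambda>x. ext G2 (G1 x)) p"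
  unfolding ext_def[of G1] ext_def[of "\<lambda>x. ext G2 (G1 x)"]
  by (simp add: ext_sum ext_sc W_def ext_prod_list comp_def)

abbreviation X :: "'g \<Rightarrow> 'g pm" where "X x \<equiv> Poly_Mapping.single (Wd [x]) 1"

lemma W_X_Wd: "W X (Wd l) = Poly_Mapping.single (Wd l) 1"
proof (induction l)
  case Nil
  have "Poly_Mapping.single (Wd []) 1 = (1::'a pm)" by (metis single_one zero_word_def)
  then show ?case by (simp add: W_def)
next
  case (Cons x l)
  then have "W X (Wd (x # l)) = X x * Poly_Mapping.single (Wd l) 1" by (simp add: W_def)
  also have "\<dots> = Poly_Mapping.single (Wd (x # l)) 1" by (simp add: mult_single)
  finally show ?case .
qed

lemma W_X: "W X k = Poly_Mapping.single k 1"
  by (cases k) (simp add: W_X_Wd)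

lemma ext_X: "ext X p = p"
proof -
  have "ext X p = (\<Sum>k\<in>Poly_Mapping.keys p. Poly_Mapping.single k (Poly_Mapping.lookup p k))"
    by (simp add: ext_def W_X sc_def mult_single)
  then show ?thesis by (rule trans) (rule pm_expand[symmetric])
qed

lemma ext_gen[simp]: "ext G (X x) = G x" by simp



lemma FA_iff: "x \<in> FA \<longleftrightarrow> (\<exists>p. x = of_pm p)"
  by (metis of_pm_FA of_to_pm)

definition IP :: "'g fa set \<Rightarrow> 'g pm set" where "IP R = {p. of_pm p \<in> fa_ideal R}"

lemma IP_zero[simp]: "0 \<in> IP R"
  using fa_ideal.zero[of R] by (simp add: IP_def fa_zero_pm)
lemma IP_add: "p \<in> IP R \<Longrightarrow> q \<in> IP R \<Longrightarrow> p + q \<in> IP R"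
  using fa_ideal.add by (fastforce simp: IP_def fa_add_pm)
lemma IP_sc: "p \<in> IP R \<Longrightarrow> sc c * p \<in> IP R"
  using fa_ideal.smult by (fastforce simp: IP_def fa_smult_pm sc_def)
lemma IP_mult: "p \<in> IP R \<Longrightarrow> u * p * v \<in> IP R"
proof -
  assume "p \<in> IP R"
  then have "fa_mult (fa_mult (of_pm u) (of_pm p)) (of_pm v) \<in> fa_ideal R"
    by (intro fa_ideal.mult) (simp_all add: IP_def)
  then show ?thesis by (simp add: IP_def fa_mult_pm)
qed
lemma IP_multL: "p \<in> IP R \<Longrightarrow> u * p \<in> IP R"
  using IP_mult[of p R u 1] by simp
lemma IP_multR: "p \<in> IP R \<Longrightarrow> p * v \<in> IP R"
  using IP_mult[of p R 1 v] by simp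
lemma IP_uminus: "p \<in> IP R \<Longrightarrow> - p \<in> IP R"
  using IP_multL[of p R "-1"] by simp
lemma IP_diff: "p \<in> IP R \<Longrightarrow> q \<in> IP R \<Longrightarrow> p - q \<in> IP R"
  using IP_add[OF _ IP_uminus] by (metis diff_conv_add_uminus)

definition cg :: "'g fa set \<Rightarrow> 'g pm \<Rightarrow> 'g pm \<Rightarrow> bool" where "cg R x y \<longleftrightarrow> x - y \<in> IP R"

lemma cg_refl[simp]: "cg R x x" by (simp add: cg_def)
lemma cg_sym: "cg R x y \<Longrightarrow> cg R y x"
  unfolding cg_def by (metis IP_uminus minus_diff_eq)
lemma cg_trans: "cg R x y \<Longrightarrow> cg R y z \<Longrightarrow> cg R x z"
  unfolding cg_def using IP_add[of "x - y" R "y - z"] by simp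
lemma cg_add: "cg R x x' \<Longrightarrow> cg R y y' \<Longrightarrow> cg R (x + y) (x' + y')"
proof -
  have "x + y - (x' + y') = (x - x') + (y - y')" by (simp add: algebra_simps)
  then show "cg R x x' \<Longrightarrow> cg R y y' \<Longrightarrow> cg R (x + y) (x' + y')" unfolding cg_def by (metis IP_add)
qed
lemma cg_diff: "cg R x x' \<Longrightarrow> cg R y y' \<Longrightarrow> cg R (x - y) (x' - y')"
proof -
  have "x - y - (x' - y') = (x - x') - (y - y')" by (simp add: algebra_simps)
  then show "cg R x x' \<Longrightarrow> cg R y y' \<Longrightarrow> cg R (x - y) (x' - y')" unfolding cg_def by (metis IP_diff)
qed
lemma cg_mult: "cg R x x' \<Longrightarrow> cg R y y' \<Longrightarrow> cg R (x * y) (x' * y')"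
proof -
  assume a: "cg R x x'" "cg R y y'"
  have "x * y - x' * y' = (x - x') * y + x' * (y - y')" by (simp add: algebra_simps)
  then show ?thesis using a unfolding cg_def by (metis IP_add IP_multL IP_multR)
qed
lemma cg_zero: "cg R x 0 \<longleftrightarrow> x \<in> IP R" by (simp add: cg_def)

lemma ideal_FA: assumes "R \<subseteq> FA" shows "z \<in> fa_ideal R \<Longrightarrow> z \<in> FA"
proof (induction rule: fa_ideal.induct)
  case (gen r) then show ?case using assms by auto
next
  case zero then show ?case by (simp add: fa_zero_pm)
next
  case (add x y) then show ?case by (metis FA_iff fa_add_pm)
next
  case (smult x c) then show ?case by (metis FA_iff fa_smult_pm)
next
  case (mult x u v) then show ?case by (metis FA_iff fa_mult_pm)
qed

lemma ext_ideal:
  assumes R: "R \<subseteq> FA" and img: "\<And>r. r \<in> R \<Longrightarrow> ext G (to_pm r) \<in> IP R'"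
  shows "p \<in> IP R \<Longrightarrow> ext G p \<in> IP R'"
proof -
  have "z \<in> fa_ideal R \<Longrightarrow> ext G (to_pm z) \<in> IP R'" for z
  proof (induction rule: fa_ideal.induct)
    case (gen r) then show ?case using img by auto
  next
    case zero then show ?case by (simp add: fa_zero_pm)
  next
    case (add x y)
    then obtain x' y' where "x = of_pm x'" "y = of_pm y'" by (metis FA_iff ideal_FA[OF R])
    then show ?case using add by (simp add: fa_add_pm ext_add IP_add)
  next
    case (smult x c)
    then obtain x' where "x = of_pm x'" by (metis FA_iff ideal_FA[OF R])
    then show ?case using smult by (simp add: fa_smult_pm ext_mult IP_multL flip: sc_def)
  next
    case (mult x u v)
    then obtain x' u' v' where "x = of_pm x'" "u = of_pm u'" "v = of_pm v'" by (metis FA_iff ideal_FA[OF R])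
    then show ?case using mult by (simp add: fa_mult_pm ext_mult IP_mult)
  qed
  then show "p \<in> IP R \<Longrightarrow> ext G p \<in> IP R'" by (metis IP_def mem_Collect_eq to_of_pm)
qed

lemma gen_IP: "r \<in> R \<Longrightarrow> r \<in> FA \<Longrightarrow> to_pm r \<in> IP R"
  by (simp add: IP_def fa_ideal.gen)



abbreviation "XK \<equiv> X GK"
abbreviation "XKb \<equiv> X GKb"
abbreviation "XL \<equiv> X GL"
abbreviation "XLb \<equiv> X GLb"
abbreviation "Xk \<equiv> X Gk"
abbreviation "Xki \<equiv> X Gkinv"

lemma H0_rels_pm: "H0_rels = {of_pm (Xk * Xki - 1), of_pm (Xki * Xk - 1)}"
  by (simp add: H0_rels_def fa_gen_pm fa_mult_pm fa_diff_pm fa_one_pm)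

lemma H_rels_pm: "H_rels = {of_pm (XK * XKb * XK - XK), of_pm (XKb * XK * XKb - XKb),
   of_pm (XK * XKb - XKb * XK), of_pm (XL * XLb * XL - XL), of_pm (XLb * XL * XLb - XLb),
   of_pm (XL * XLb - XLb * XL), of_pm (XK * XKb + XL * XLb - 1)}"
  by (simp add: H_rels_def Let_def fa_gen_pm fa_mult_pm fa_diff_pm fa_one_pm fa_add_pm)

lemma H0_FA: "H0_rels \<subseteq> FA" by (simp add: H0_rels_pm)
lemma H_FA: "H_rels \<subseteq> FA" by (simp add: H_rels_pm)

lemma cg_rel: "of_pm (x - y) \<in> R \<Longrightarrow> cg R x y"
  unfolding cg_def using gen_IP[of "of_pm (x - y)" R] by simp

lemma cg_eq: "cg R x y \<Longrightarrow> x = x' \<Longrightarrow> y = y' \<Longrightarrow> cg R x' y'" by simp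

lemma cg_trans_eq: assumes "cg R x y" "cg R y' z" "y = y'" shows "cg R x z"
  using cg_trans[OF assms(1)] assms(2,3) by simp

lemma cg_zprod: "cg R x (x1 * A) \<Longrightarrow> cg R y (B * y1) \<Longrightarrow> cg R (A * B) 0 \<Longrightarrow> cg R (x * y) 0"
proof -
  assume a: "cg R x (x1 * A)" "cg R y (B * y1)" "cg R (A * B) 0"
  have c1: "cg R (x * y) ((x1 * A) * (B * y1))" by (rule cg_mult[OF a(1,2)])
  have "cg R (x1 * (A * B) * y1) (x1 * 0 * y1)"
    by (intro cg_mult cg_refl a(3))
  then have c2: "cg R ((x1 * A) * (B * y1)) 0" by (simp add: mult.assoc)
  show ?thesis by (rule cg_trans[OF c1 c2])
qed

lemma cg_sc0: "cg R x 0 \<Longrightarrow> cg R (sc c * x) 0"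
proof -
  assume "cg R x 0"
  then have "cg R (sc c * x) (sc c * 0)" by (intro cg_mult cg_refl)
  then show ?thesis by simp
qed

lemma J_facts:
  defines "J \<equiv> H_rels"
  shows "cg J (XK * XLb) 0" "cg J (XL * XKb) 0" "cg J (XKb * XL) 0" "cg J (XLb * XK) 0"
    "cg J (XKb * XK) (XK * XKb)" "cg J (XLb * XL) (XL * XLb)" "cg J (XK * XKb + XL * XLb) 1"
proof -
  have r1: "cg J (XK * XKb * XK) XK" and r2: "cg J (XKb * XK * XKb) XKb"
   and r3: "cg J (XK * XKb) (XKb * XK)" and r4: "cg J (XL * XLb * XL) XL"
   and r5: "cg J (XLb * XL * XLb) XLb" and r6: "cg J (XL * XLb) (XLb * XL)"
   and r7: "cg J (XK * XKb + XL * XLb) 1"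
    unfolding J_def H_rels_pm by (rule cg_rel, blast)+
  let ?P = "XK * XKb" and ?Q = "XL * XLb"
  have PP: "cg J (?P * ?P) ?P" by (rule cg_eq[OF cg_mult[OF r1 cg_refl[of J XKb]]]) (simp_all add: mult.assoc)
  have QQ: "cg J (?Q * ?Q) ?Q" by (rule cg_eq[OF cg_mult[OF r4 cg_refl[of J XLb]]]) (simp_all add: mult.assoc)
  have Q1: "cg J ?Q (1 - ?P)" by (rule cg_eq[OF cg_diff[OF r7 cg_refl[of J ?P]]]) simp_all
  have P1: "cg J ?P (1 - ?Q)" by (rule cg_eq[OF cg_diff[OF r7 cg_refl[of J ?Q]]]) simp_all
  have a1: "cg J (?P * ?Q) (?P * (1 - ?P))" by (rule cg_mult[OF cg_refl Q1])
  have a2: "cg J (?P * (1 - ?P)) (?P - ?P)"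
    by (rule cg_eq[OF cg_diff[OF cg_refl[of J ?P] PP]]) (simp_all only: right_diff_distrib mult_1_right)
  have PQ: "cg J (?P * ?Q) 0" using cg_trans[OF a1 a2] by simp
  have b1: "cg J (?Q * ?P) (?Q * (1 - ?Q))" by (rule cg_mult[OF cg_refl P1])
  have b2: "cg J (?Q * (1 - ?Q)) (?Q - ?Q)"
    by (rule cg_eq[OF cg_diff[OF cg_refl[of J ?Q] QQ]]) (simp_all only: right_diff_distrib mult_1_right)
  have QP: "cg J (?Q * ?P) 0" using cg_trans[OF b1 b2] by simp
  have KP: "cg J XK (XK * ?P)"
    by (rule cg_sym, rule cg_trans_eq[OF cg_mult[OF cg_refl[of J XK] r3] r1]) (simp add: mult.assoc)
  have PK: "cg J XK (?P * XK)" using cg_sym[OF r1] by simp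
  have QLb: "cg J XLb (?Q * XLb)"
    by (rule cg_sym, rule cg_trans_eq[OF cg_mult[OF r6 cg_refl[of J XLb]] r5]) (simp add: mult.assoc)
  have LbQ: "cg J XLb (XLb * ?Q)" using cg_sym[OF r5] by (simp add: mult.assoc)
  have LQ: "cg J XL (XL * ?Q)"
    by (rule cg_sym, rule cg_trans_eq[OF cg_mult[OF cg_refl[of J XL] r6] r4]) (simp add: mult.assoc)
  have QL: "cg J XL (?Q * XL)" using cg_sym[OF r4] by simp
  have PKb: "cg J XKb (?P * XKb)"
    by (rule cg_sym, rule cg_trans_eq[OF cg_mult[OF r3 cg_refl[of J XKb]] r2]) (simp add: mult.assoc)
  have KbP: "cg J XKb (XKb * ?P)" using cg_sym[OF r2] by (simp add: mult.assoc)
  show "cg J (XK * XLb) 0" by (rule cg_zprod[OF KP QLb PQ])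
  show "cg J (XL * XKb) 0" by (rule cg_zprod[OF LQ PKb QP])
  show "cg J (XKb * XL) 0" by (rule cg_zprod[OF KbP QL PQ])
  show "cg J (XLb * XK) 0" by (rule cg_zprod[OF LbQ PK QP])
  show "cg J (XKb * XK) (XK * XKb)" by (rule cg_sym[OF r3])
  show "cg J (XLb * XL) (XL * XLb)" by (rule cg_sym[OF r6])
  show "cg J (XK * XKb + XL * XLb) 1" by (rule r7)
qed



lemma single_sc_left: "Poly_Mapping.single k a * (sc c * y) = sc c * (Poly_Mapping.single k a * y)"
  by (rule mult_sc_left)

definition GPhi :: "complex \<Rightarrow> complex \<Rightarrow> complex \<Rightarrow> complex \<Rightarrow> gen0 \<Rightarrow> gen pm" where
  "GPhi c c' d d' g = (case g of Gk \<Rightarrow> sc c * XK + sc d * XL | Gkinv \<Rightarrow> sc c' * XKb + sc d' * XLb)"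
definition GPsi :: "complex \<Rightarrow> complex \<Rightarrow> gen \<Rightarrow> gen0 pm" where
  "GPsi c c' g = (case g of GK \<Rightarrow> sc c' * Xk | GKb \<Rightarrow> sc c * Xki | GL \<Rightarrow> 0 | GLb \<Rightarrow> 0)"

lemma Phi_rels:
  assumes c: "c * c' = 1" and d: "d * d' = 1"
  shows "r \<in> H0_rels \<Longrightarrow> ext (GPhi c c' d d') (to_pm r) \<in> IP H_rels"
proof -
  let ?J = "H_rels"
  have c2: "c' * c = 1" using c by (simp add: mult.commute)
  have d2: "d' * d = 1" using d by (simp add: mult.commute)
  note jf = J_facts
  have e1: "ext (GPhi c c' d d') (Xk * Xki - 1) =
     (XK * XKb + sc (c * d') * (XK * XLb) + sc (d * c') * (XL * XKb) + XL * XLb) - 1"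
    by (simp add: ext_mult ext_minus GPhi_def algebra_simps single_sc_left sc_sc c d)
  have e2: "ext (GPhi c c' d d') (Xki * Xk - 1) =
     (XKb * XK + sc (c' * d) * (XKb * XL) + sc (d' * c) * (XLb * XK) + XLb * XL) - 1"
    by (simp add: ext_mult ext_minus GPhi_def algebra_simps single_sc_left sc_sc c c2 d d2)
  have B: "cg ?J ((XK * XKb + XL * XLb) - 1) (1 - 1)"
    by (intro cg_diff cg_refl jf)
  have "cg ?J ((XK * XKb + sc (c * d') * (XK * XLb) + sc (d * c') * (XL * XKb) + XL * XLb) - 1)
         ((XK * XKb + 0 + 0 + XL * XLb) - 1)"
    by (intro cg_diff cg_add cg_refl cg_sc0 jf)
  then have "cg ?J ((XK * XKb + sc (c * d') * (XK * XLb) + sc (d * c') * (XL * XKb) + XL * XLb) - 1)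
         ((XK * XKb + XL * XLb) - 1)" by simp
  from cg_trans[OF this B] have g1: "cg ?J (ext (GPhi c c' d d') (Xk * Xki - 1)) 0"
    unfolding e1 by simp
  have "cg ?J ((XKb * XK + sc (c' * d) * (XKb * XL) + sc (d' * c) * (XLb * XK) + XLb * XL) - 1)
         ((XK * XKb + 0 + 0 + XL * XLb) - 1)"
    by (intro cg_diff cg_add cg_refl cg_sc0 jf)
  then have "cg ?J ((XKb * XK + sc (c' * d) * (XKb * XL) + sc (d' * c) * (XLb * XK) + XLb * XL) - 1)
         ((XK * XKb + XL * XLb) - 1)" by simp
  from cg_trans[OF this B] have g2: "cg ?J (ext (GPhi c c' d d') (Xki * Xk - 1)) 0"
    unfolding e2 by simp
  assume "r \<in> H0_rels"
  then have "r \<in> {of_pm (Xk * Xki - 1), of_pm (Xki * Xk - 1)}" by (simp only: H0_rels_pm)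
  then show ?thesis
    by (elim insertE emptyE) (simp_all only: to_of_pm g1[unfolded cg_zero] g2[unfolded cg_zero])
qed

lemma Psi_rels:
  assumes c: "c * c' = 1"
  shows "r \<in> H_rels \<Longrightarrow> ext (GPsi c c') (to_pm r) \<in> IP H0_rels"
proof -
  let ?I = "H0_rels"
  have c2: "c' * c = 1" using c by (simp add: mult.commute)
  have s1: "cg ?I (Xk * Xki) 1" and s2: "cg ?I (Xki * Xk) 1"
    unfolding H0_rels_pm by (rule cg_rel, blast)+
  have "ext (GPsi c c') (XK * XKb * XK - XK) = sc (c' * (c * c')) * (Xk * (Xki * Xk)) - sc c' * Xk"
    by (simp add: ext_mult ext_minus GPsi_def single_sc_left sc_sc mult.assoc)
  also have "\<dots> = sc c' * (Xk * Xki * Xk - Xk)" by (simp add: c mult.assoc right_diff_distrib)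
  finally have e1: "ext (GPsi c c') (XK * XKb * XK - XK) = sc c' * (Xk * Xki * Xk - Xk)" .
  have "cg ?I (Xk * Xki * Xk - Xk) (1 * Xk - Xk)" by (intro cg_diff cg_mult cg_refl s1)
  then have t1: "cg ?I (ext (GPsi c c') (XK * XKb * XK - XK)) 0" unfolding e1 by (intro cg_sc0) simp
  have "ext (GPsi c c') (XKb * XK * XKb - XKb) = sc (c * (c' * c)) * (Xki * (Xk * Xki)) - sc c * Xki"
    by (simp add: ext_mult ext_minus GPsi_def single_sc_left sc_sc mult.assoc)
  also have "\<dots> = sc c * (Xki * Xk * Xki - Xki)" by (simp add: c2 mult.assoc right_diff_distrib)
  finally have e2: "ext (GPsi c c') (XKb * XK * XKb - XKb) = sc c * (Xki * Xk * Xki - Xki)" .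
  have "cg ?I (Xki * Xk * Xki - Xki) (1 * Xki - Xki)" by (intro cg_diff cg_mult cg_refl s2)
  then have t2: "cg ?I (ext (GPsi c c') (XKb * XK * XKb - XKb)) 0" unfolding e2 by (intro cg_sc0) simp
  have e3: "ext (GPsi c c') (XK * XKb - XKb * XK) = Xk * Xki - Xki * Xk"
    by (simp add: ext_mult ext_minus GPsi_def single_sc_left sc_sc c c2 mult.assoc)
  have "cg ?I (Xk * Xki - Xki * Xk) (1 - 1)" by (intro cg_diff s1 s2)
  then have t3: "cg ?I (ext (GPsi c c') (XK * XKb - XKb * XK)) 0" unfolding e3 by simp
  have e7: "ext (GPsi c c') (XK * XKb + XL * XLb - 1) = Xk * Xki - 1"
    by (simp add: ext_mult ext_minus ext_add GPsi_def single_sc_left sc_sc c c2 mult.assoc)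
  have "cg ?I (Xk * Xki - 1) (1 - 1)" by (intro cg_diff s1 cg_refl)
  then have t7: "cg ?I (ext (GPsi c c') (XK * XKb + XL * XLb - 1)) 0" unfolding e7 by simp
  have t4: "ext (GPsi c c') (XL * XLb * XL - XL) = 0" "ext (GPsi c c') (XLb * XL * XLb - XLb) = 0"
     "ext (GPsi c c') (XL * XLb - XLb * XL) = 0"
    by (simp_all add: ext_mult ext_minus GPsi_def)
  have t4': "ext (GPsi c c') (XL * XLb * XL - XL) \<in> IP ?I" "ext (GPsi c c') (XLb * XL * XLb - XLb) \<in> IP ?I"
     "ext (GPsi c c') (XL * XLb - XLb * XL) \<in> IP ?I"
    by (simp only: t4 IP_zero)+
  assume "r \<in> H_rels"
  then have "r \<in> {of_pm (XK * XKb * XK - XK), of_pm (XKb * XK * XKb - XKb),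
   of_pm (XK * XKb - XKb * XK), of_pm (XL * XLb * XL - XL), of_pm (XLb * XL * XLb - XLb),
   of_pm (XL * XLb - XLb * XL), of_pm (XK * XKb + XL * XLb - 1)}" by (simp only: H_rels_pm)
  then show ?thesis
    by (elim insertE emptyE)
      (simp_all only: to_of_pm t1[unfolded cg_zero] t2[unfolded cg_zero] t3[unfolded cg_zero] t4' t7[unfolded cg_zero])
qed

lemma Psi_Phi:
  assumes c: "c * c' = 1"
  shows "ext (GPsi c c') (ext (GPhi c c' d d') p) = p"
proof -
  have c2: "c' * c = 1" using c by (simp add: mult.commute)
  have "(\<lambda>x. ext (GPsi c c') (GPhi c c' d d' x)) = X"
  proof
    fix x show "ext (GPsi c c') (GPhi c c' d d' x) = X x"
      by (cases x) (simp_all add: GPhi_def GPsi_def ext_add ext_sc sc_sc c c2)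
  qed
  then show ?thesis by (simp add: ext_comp ext_X)
qed



lemma of_pm0_ideal: "of_pm 0 \<in> fa_ideal R"
  using fa_ideal.zero by (metis fa_zero_pm)

theorem proposition1:
  fixes a b :: real
  assumes "a \<noteq> 0" and "b \<noteq> 0"
  shows "\<exists>\<Phi>. quot_alg_hom H0_ideal H_ideal \<Phi> \<and>
     fa_diff (\<Phi> (fa_gen Gk))
       (fa_add (fa_smult (complex_of_real a) (fa_gen GK)) (fa_smult (complex_of_real b) (fa_gen GL)))
       \<in> H_ideal \<and>
     fa_diff (\<Phi> (fa_gen Gkinv))
       (fa_add (fa_smult (complex_of_real (inverse a)) (fa_gen GKb))
               (fa_smult (complex_of_real (inverse b)) (fa_gen GLb)))
       \<in> H_ideal \<and>
     quot_inj H0_ideal H_ideal \<Phi>"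
proof -
  define ca where "ca = complex_of_real a"
  define cb where "cb = complex_of_real b"
  define ca' where "ca' = complex_of_real (inverse a)"
  define cb' where "cb' = complex_of_real (inverse b)"
  have c: "ca * ca' = 1" using assms(1) unfolding ca_def ca'_def by (simp flip: of_real_mult)
  have d: "cb * cb' = 1" using assms(2) unfolding cb_def cb'_def by (simp flip: of_real_mult)
  define G where "G = GPhi ca ca' cb cb'"
  define \<Phi> where "\<Phi> = (\<lambda>x. of_pm (ext G (to_pm x)))"
  have Phi_pm: "\<Phi> (of_pm p) = of_pm (ext G p)" for p by (simp add: \<Phi>_def)
  have hom_ideal: "p \<in> IP H0_rels \<Longrightarrow> ext G p \<in> IP H_rels" for p
    unfolding G_def by (rule ext_ideal[OF H0_FA Phi_rels[OF c d]])
  have inv_ideal: "p \<in> IP H_rels \<Longrightarrow> ext (GPsi ca ca') p \<in> IP H0_rels" for p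
    by (rule ext_ideal[OF H_FA Psi_rels[OF c]])
  have h1: "\<forall>x\<in>FA. \<Phi> x \<in> FA" by (simp add: \<Phi>_def)
  have h2: "\<forall>x\<in>FA. \<forall>y\<in>FA. fa_diff x y \<in> H0_ideal \<longrightarrow> fa_diff (\<Phi> x) (\<Phi> y) \<in> H_ideal"
  proof (intro ballI impI)
    fix x y :: "gen0 fa" assume "x \<in> FA" "y \<in> FA" and h: "fa_diff x y \<in> H0_ideal"
    then obtain x' y' where xy: "x = of_pm x'" "y = of_pm y'" by (meson FA_iff)
    with h have "x' - y' \<in> IP H0_rels" by (simp add: H0_ideal_def fa_diff_pm IP_def)
    then have "ext G x' - ext G y' \<in> IP H_rels" using hom_ideal[of "x' - y'"] by (simp add: ext_minus)
    then show "fa_diff (\<Phi> x) (\<Phi> y) \<in> H_ideal" by (simp add: xy Phi_pm fa_diff_pm H_ideal_def IP_def)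
  qed
  have h3: "\<forall>x\<in>FA. \<forall>y\<in>FA. fa_diff (\<Phi> (fa_add x y)) (fa_add (\<Phi> x) (\<Phi> y)) \<in> H_ideal"
  proof (intro ballI)
    fix x y :: "gen0 fa" assume "x \<in> FA" "y \<in> FA"
    then obtain x' y' where xy: "x = of_pm x'" "y = of_pm y'" by (meson FA_iff)
    show "fa_diff (\<Phi> (fa_add x y)) (fa_add (\<Phi> x) (\<Phi> y)) \<in> H_ideal"
      by (simp add: xy H_ideal_def Phi_pm fa_diff_pm fa_add_pm ext_add of_pm0_ideal)
  qed
  have h4: "\<forall>c. \<forall>x\<in>FA. fa_diff (\<Phi> (fa_smult c x)) (fa_smult c (\<Phi> x)) \<in> H_ideal"
  proof (intro allI ballI)
    fix c and x :: "gen0 fa" assume "x \<in> FA"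
    then obtain x' where xy: "x = of_pm x'" by (meson FA_iff)
    show "fa_diff (\<Phi> (fa_smult c x)) (fa_smult c (\<Phi> x)) \<in> H_ideal"
      by (simp add: xy H_ideal_def Phi_pm fa_diff_pm fa_smult_pm ext_sc of_pm0_ideal flip: sc_def)
  qed
  have h5: "\<forall>x\<in>FA. \<forall>y\<in>FA. fa_diff (\<Phi> (fa_mult x y)) (fa_mult (\<Phi> x) (\<Phi> y)) \<in> H_ideal"
  proof (intro ballI)
    fix x y :: "gen0 fa" assume "x \<in> FA" "y \<in> FA"
    then obtain x' y' where xy: "x = of_pm x'" "y = of_pm y'" by (meson FA_iff)
    show "fa_diff (\<Phi> (fa_mult x y)) (fa_mult (\<Phi> x) (\<Phi> y)) \<in> H_ideal"
      by (simp add: xy H_ideal_def Phi_pm fa_diff_pm fa_mult_pm ext_mult of_pm0_ideal)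
  qed
  have h6: "fa_diff (\<Phi> fa_one) fa_one \<in> H_ideal"
    by (simp add: H_ideal_def Phi_pm fa_diff_pm fa_one_pm of_pm0_ideal)
  have hom: "quot_alg_hom H0_ideal H_ideal \<Phi>"
    unfolding quot_alg_hom_def using h1 h2 h3 h4 h5 h6 by blast
  have g1: "fa_diff (\<Phi> (fa_gen Gk))
       (fa_add (fa_smult (complex_of_real a) (fa_gen GK)) (fa_smult (complex_of_real b) (fa_gen GL)))
       \<in> H_ideal"
    by (simp add: H_ideal_def fa_gen_pm Phi_pm G_def GPhi_def fa_smult_pm fa_add_pm fa_diff_pm
        of_pm0_ideal ca_def cb_def flip: sc_def)
  have g2: "fa_diff (\<Phi> (fa_gen Gkinv))
       (fa_add (fa_smult (complex_of_real (inverse a)) (fa_gen GKb))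
               (fa_smult (complex_of_real (inverse b)) (fa_gen GLb)))
       \<in> H_ideal"
    by (simp add: H_ideal_def fa_gen_pm Phi_pm G_def GPhi_def fa_smult_pm fa_add_pm fa_diff_pm
        of_pm0_ideal ca'_def cb'_def flip: sc_def)
  have inj: "quot_inj H0_ideal H_ideal \<Phi>"
    unfolding quot_inj_def
  proof (intro ballI impI)
    fix x y :: "gen0 fa" assume "x \<in> FA" "y \<in> FA" and h: "fa_diff (\<Phi> x) (\<Phi> y) \<in> H_ideal"
    then obtain x' y' where xy: "x = of_pm x'" "y = of_pm y'" by (meson FA_iff)
    with h have "ext G x' - ext G y' \<in> IP H_rels" by (simp add: Phi_pm fa_diff_pm IP_def H_ideal_def)
    then have "ext (GPsi ca ca') (ext G x' - ext G y') \<in> IP H0_rels" by (rule inv_ideal)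
    then have "x' - y' \<in> IP H0_rels" by (simp add: ext_minus G_def Psi_Phi[OF c])
    then show "fa_diff x y \<in> H0_ideal" by (simp add: xy fa_diff_pm IP_def H0_ideal_def)
  qed
  show ?thesis using hom g1 g2 inj by blast
qed

end
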